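(* Let $\mathbf{S}\subset\mathbb{R}^2$ be the unit circle centered at the origin. Let $0\le \alpha_1<\alpha_2<\alpha_3<\alpha_4< \pi$ and set $A_i=(\cos 2\alpha_i,\sin 2\alpha_i)\in\mathbf{S}$ for $1\le i\le 4$ (so $A_1,A_2,A_3,A_4$ are distinct and arranged counterclockwise). For each $i$, let $H_i$ be a Euclidean circle of radius $r_i$ (with $0<r_i<1$) contained in the closed unit disk and tangent to $\mathbf{S}$ from the inside at $A_i$, and assume $H_i\cap H_j=\varnothing$ for all $i\neq j$. For $1\le i<j\le 4$ define: - $d_{ij}$ = the Euclidean distance between $A_i$ and $A_j$; - $t_{ij}$ = the length of the exterior common tangent segment to $H_i$ and $H_j$ (the common tangent drawn so that both circles lie on the same side of it), measured between the two points of tangency; - $\lambda_{ij}=e^{\delta_{ij}/2}$, where $\delta_{ij}$ is defined as follows: regard the open unit disk as the Poincaré disk model of the hyperbolic plane, with metric $ds^2=4(dx^2+dy^2)/(1-x^2-y^2)^2$, so that $H_i$ is a horocycle centered at the ideal point $A_i$; let $\gamma_{ij}$ be the hyperbolic geodesic with ideal endpoints $A_i$ and $A_j$; then $\delta_{ij}$ is the hyperbolic distance along $\gamma_{ij}$ between the points $H_i\cap\gamma_{ij}$ and $H_j\cap\gamma_{ij}$; - $P_{ij}=\det\begin{bmatrix}\cos\alpha_i & \cos\alpha_j\\ \sin\alpha_i & \sin\alpha_j\end{bmatrix}$. Then for all $1\le i<j\le 4$: $$t_{ij}=\sqrt{1-r_i}\,\sqrt{1-r_j}\,d_{ij},\qquad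 t_{ij}=\lambda_{ij}\sqrt{2r_i}\,\sqrt{2r_j},\qquad d_{ij}=2P_{ij}.$$
   Context: Here $H_i\cap\gamma_{ij}$ denotes the single point where the geodesic $\gamma_{ij}$ (a circular arc or diameter orthogonal to $\mathbf{S}$) meets the horocycle $H_i$ other than the ideal point $A_i$ itself. *)

theory Defs
  imports "HOL-Analysis.Analysis"
begin

text \<open>The plane is modelled by the complex numbers; the unit circle S is sphere 0 1,
  the Poincare disk is ball 0 1.\<close>

text \<open>Hyperbolic distance in the Poincare disk model with metric
  ds^2 = 4(dx^2+dy^2)/(1-x^2-y^2)^2.\<close>
definition poincare_dist :: "complex \<Rightarrow> complex \<Rightarrow> real" where
  "poincare_dist z w =
     arcosh (1 + 2 * (cmod (z - w))\<^sup>2 / ((1 - (cmod z)\<^sup>2) * (1 - (cmod w)\<^sup>2)))"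

text \<open>The hyperbolic geodesic with ideal endpoints a, b (points of the unit circle):
  the part inside the open disk of the circle through a and b orthogonal to the unit
  circle (|c|^2 = 1 + rho^2), or of the diameter through a and b.\<close>
definition ideal_geodesic :: "complex \<Rightarrow> complex \<Rightarrow> complex set" where
  "ideal_geodesic a b =
     {z. cmod z < 1 \<and>
        ((\<exists>c \<rho>. \<rho> > 0 \<and> (cmod c)\<^sup>2 = 1 + \<rho>\<^sup>2 \<and> dist a c = \<rho> \<and> dist b c = \<rho> \<and> dist z c = \<rho>)
         \<or> ((\<exists>s::real. b = of_real s * a) \<and> (\<exists>t::real. z = of_real t * a)))}"

text \<open>p, q are the points of tangency of an exterior common tangent line of the circles
  with centres c1, c2 and radii r1, r2: the line through p and q is perpendicular to the
  unit normal u at both points, and both circles lie on the same side of it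
  (the side opposite to u).\<close>
definition ext_common_tangent_pts ::
  "complex \<Rightarrow> real \<Rightarrow> complex \<Rightarrow> real \<Rightarrow> complex \<Rightarrow> complex \<Rightarrow> bool" where
  "ext_common_tangent_pts c1 r1 c2 r2 p q \<longleftrightarrow>
     (\<exists>u. norm u = 1 \<and> p = c1 + of_real r1 * u \<and> q = c2 + of_real r2 * u \<and>
          inner (q - p) u = 0)"

definition ext_tangent_length :: "complex \<Rightarrow> real \<Rightarrow> complex \<Rightarrow> real \<Rightarrow> real" where
  "ext_tangent_length c1 r1 c2 r2 =
     (THE t. \<exists>p q. ext_common_tangent_pts c1 r1 c2 r2 p q \<and> t = dist p q)"

end

theory Submission
  imports Defs
begin


lemma cmod_sq: "(cmod z)^2 = (Re z)^2 + (Im z)^2"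
  by (simp add: cmod_power2)

lemma dist_sq: "(dist z w)^2 = (Re z - Re w)^2 + (Im z - Im w)^2"
  by (simp add: dist_norm cmod_power2)

lemma dist_eq_sq: "\<rho> \<ge> 0 \<Longrightarrow> (dist z w)^2 = \<rho>^2 \<Longrightarrow> dist z w = \<rho>"
  by (metis zero_le_dist power2_eq_imp_eq)

lemma frame_geo_D:
  assumes s: "s > 0" and cs: "c^2 + s^2 = 1"
    and z: "z \<in> ideal_geodesic (Complex c (-s)) (Complex c s)"
  shows "c * (1 + (cmod z)^2) = 2 * Re z \<and> cmod z < 1"
proof -
  have lt: "cmod z < 1" using z by (simp add: ideal_geodesic_def)
  from z consider
    (circ) g \<rho> where "\<rho> > 0" "(cmod g)^2 = 1 + \<rho>^2" "dist (Complex c (-s)) g = \<rho>"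
        "dist (Complex c s) g = \<rho>" "dist z g = \<rho>"
  | (diam) \<sigma> t where "Complex c s = of_real \<sigma> * Complex c (-s)" "z = of_real t * Complex c (-s)"
    unfolding ideal_geodesic_def by blast
  then show ?thesis
  proof cases
    case circ
    let ?g1 = "Re g" and ?g2 = "Im g"
    have e1: "(c - ?g1)^2 + (-s - ?g2)^2 = ?g1^2 + ?g2^2 - 1"
      using circ(2) arg_cong[OF circ(3), of power2] unfolding dist_sq cmod_sq by simp
    have e2: "(c - ?g1)^2 + (s - ?g2)^2 = ?g1^2 + ?g2^2 - 1"
      using circ(2) arg_cong[OF circ(4), of power2] unfolding dist_sq cmod_sq by simp
    have e3: "(Re z - ?g1)^2 + (Im z - ?g2)^2 = ?g1^2 + ?g2^2 - 1"
      using circ(2) arg_cong[OF circ(5), of power2] unfolding dist_sq cmod_sq by simp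
    have "(-s - ?g2)^2 - (s - ?g2)^2 = 0" using e1 e2 by linarith
    moreover have "(-s - ?g2)^2 - (s - ?g2)^2 = 4 * s * ?g2" by algebra
    ultimately have g2: "?g2 = 0" using s by simp
    have cg: "c * ?g1 = 1" using e1 cs g2 by (simp add: power2_eq_square algebra_simps)
    have "c * ((Re z)^2 + (Im z)^2 + 1) = 2 * Re z * (c * ?g1)"
      using e3 g2 by (simp add: power2_eq_square algebra_simps)
    then show ?thesis using lt cg by (simp add: cmod_sq algebra_simps)
  next
    case diam
    have "s = - \<sigma> * s" "c = \<sigma> * c" using diam(1) by (simp_all add: complex_eq_iff)
    hence "\<sigma> * s = (-1) * s" by simp
    moreover have "s \<noteq> 0" using s by simp
    ultimately have "\<sigma> = -1" using mult_right_cancel by blast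
    hence "c = 0" using \<open>c = \<sigma> * c\<close> by simp
    then show ?thesis using lt diam(2) by simp
  qed
qed

lemma frame_geo_I:
  assumes s: "s > 0" and cs: "c^2 + s^2 = 1"
    and lt: "cmod z < 1" and eq: "c * (1 + (cmod z)^2) = 2 * Re z"
  shows "z \<in> ideal_geodesic (Complex c (-s)) (Complex c s)"
proof (cases "c = 0")
  case True
  hence s1: "s = 1" using cs s by (simp add: power2_eq_1_iff) 
  have "Re z = 0" using eq True by simp
  hence "z = of_real (- Im z) * Complex c (-s)" using True s1 by (simp add: complex_eq_iff)
  moreover have "Complex c s = of_real (-1) * Complex c (-s)" using True by (simp add: complex_eq_iff)
  ultimately show ?thesis using lt unfolding ideal_geodesic_def by blast
next
  case False
  define g where "g = Complex (1/c) 0"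
  define \<rho> where "\<rho> = \<bar>s / c\<bar>"
  have \<rho>: "\<rho> > 0" using False s by (simp add: \<rho>_def)
  have \<rho>2: "\<rho>^2 = s^2/c^2" by (simp add: \<rho>_def power_divide)
  have s2: "s^2 = 1 - c^2" using cs by simp
  have h: "(c - 1/c)^2 + s^2 = s^2/c^2" using False unfolding s2
    by (simp add: field_simps power2_diff power2_eq_square)
  have "(cmod g)^2 = 1 + \<rho>^2" using False unfolding \<rho>2 g_def cmod_sq s2
    by (simp add: field_simps)
  moreover have "dist (Complex c (-s)) g = \<rho>"
    using False \<rho> h by (intro dist_eq_sq, simp, unfold dist_sq \<rho>2) (simp add: g_def)
  moreover have "dist (Complex c s) g = \<rho>"
    using False \<rho> h by (intro dist_eq_sq, simp, unfold dist_sq \<rho>2) (simp add: g_def)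
  moreover have "dist z g = \<rho>"
  proof (intro dist_eq_sq)
    have e: "(Re z)^2 + (Im z)^2 = 2 * Re z / c - 1" using eq False by (simp add: cmod_sq field_simps)
    have "(Re z - 1/c)^2 + (Im z)^2 = ((Re z)^2 + (Im z)^2) - 2*Re z/c + 1/c^2"
      by (simp add: power2_diff power_divide)
    also have "\<dots> = 1/c^2 - 1" unfolding e by simp
    also have "\<dots> = s^2/c^2" unfolding s2 using False by (simp add: field_simps)
    finally have "(Re z - 1/c)^2 + (Im z)^2 = s^2/c^2" .
    then show "(dist z g)^2 = \<rho>^2" unfolding dist_sq \<rho>2 g_def by simp
  qed (use \<rho> in simp)
  ultimately show ?thesis using lt \<rho> unfolding ideal_geodesic_def by blast
qed



lemma alg_pt:
  fixes C r :: real
  assumes C: "0 \<le> C" "C < 1" and r: "0 < r" "r < 1"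
  defines "S \<equiv> 1 - C"
  defines "D \<equiv> S + r^2 * C"
  defines "X \<equiv> 1 - 2 * r * (1 - r) * S / D"
  defines "Y \<equiv> 1 - 2 * r * (1 - (1 - r) * C) / D"
  shows "C * (X - (1 - r))^2 + S * (Y - (1 - r))^2 = r^2"
    and "C * X^2 + S * Y^2 = 1 - 4 * r * (1 - r) * S / D"
    and "1 + C * X^2 + S * Y^2 = 2 * X"
proof -
  have D: "D > 0" unfolding D_def S_def using C r by (simp add: add_pos_nonneg)
  show "C * (X - (1 - r))^2 + S * (Y - (1 - r))^2 = r^2"
    unfolding X_def Y_def using D unfolding D_def S_def
    by (simp add: field_simps) (simp add: algebra_simps power2_eq_square)
  show "C * X^2 + S * Y^2 = 1 - 4 * r * (1 - r) * S / D"
    unfolding X_def Y_def using D unfolding D_def S_def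
    by (simp add: field_simps) (simp add: algebra_simps power2_eq_square)
  then show "1 + C * X^2 + S * Y^2 = 2 * X"
    unfolding X_def by simp
qed

lemma frame_pt:
  fixes c s r \<sigma> :: real
  assumes s: "s > 0" and cs: "c^2 + s^2 = 1" and r: "0 < r" "r < 1" and \<sigma>: "\<sigma>^2 = 1"
  defines "D \<equiv> s^2 + r^2 * c^2"
  defines "u \<equiv> Complex (c * (1 - 2 * r * (1 - r) * s^2 / D)) (\<sigma> * s * (1 - 2 * r * (1 - (1 - r) * c^2) / D))"
  shows "dist u (of_real (1 - r) * Complex c (\<sigma> * s)) = r"
    and "1 - (cmod u)^2 = 4 * r * (1 - r) * s^2 / D"
    and "c * (1 + (cmod u)^2) = 2 * Re u"
    and "cmod u < 1"
    and "D > 0"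
proof -
  have "s^2 > 0" using s by simp
  then have C: "0 \<le> c^2" "c^2 < 1" using cs by (simp, linarith)
  have S: "1 - c^2 = s^2" using cs by simp
  note a = alg_pt[OF C r, unfolded S, folded D_def]
  define X where "X = 1 - 2 * r * (1 - r) * s^2 / D"
  define Y where "Y = 1 - 2 * r * (1 - (1 - r) * c^2) / D"
  have u: "u = Complex (c * X) (\<sigma> * s * Y)" unfolding u_def X_def Y_def ..
  note a = a[folded X_def Y_def]
  show "D > 0" unfolding D_def using s by (simp add: add_pos_nonneg)
  have n: "(cmod u)^2 = c^2 * X^2 + s^2 * Y^2"
    unfolding u cmod_sq using \<sigma> by (simp add: power_mult_distrib)
  have "(dist u (of_real (1 - r) * Complex c (\<sigma> * s)))^2 = c^2 * (X - (1 - r))^2 + s^2 * (Y - (1 - r))^2"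
  proof -
    have "(\<sigma> * s * Y - (1 - r) * (\<sigma> * s))^2 = \<sigma>^2 * (s^2 * (Y - (1 - r))^2)" by algebra
    moreover have "(c * X - (1 - r) * c)^2 = c^2 * (X - (1 - r))^2" by algebra
    ultimately show ?thesis unfolding u dist_sq using \<sigma> by simp
  qed
  then show "dist u (of_real (1 - r) * Complex c (\<sigma> * s)) = r"
    using a(1) r by (intro dist_eq_sq) auto
  show 1: "1 - (cmod u)^2 = 4 * r * (1 - r) * s^2 / D" using a(2) n by simp
  show "c * (1 + (cmod u)^2) = 2 * Re u" using a(3) n u by simp
  have "4 * r * (1 - r) * s^2 / D > 0" using r s \<open>D > 0\<close> by simp
  then have "(cmod u)^2 < 1" using 1 by simp
  then show "cmod u < 1" by (simp add: power_less_one_iff abs_less_iff)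
qed

lemma frame_unique:
  fixes c s r \<sigma> :: real
  assumes s: "s > 0" and cs: "c^2 + s^2 = 1" and r: "0 < r" "r < 1" and \<sigma>: "\<sigma>^2 = 1"
    and w1: "dist w (of_real (1 - r) * Complex c (\<sigma> * s)) = r"
    and w2: "c * (1 + (cmod w)^2) = 2 * Re w" and w3: "cmod w < 1"
  defines "D \<equiv> s^2 + r^2 * c^2"
  shows "w = Complex (c * (1 - 2 * r * (1 - r) * s^2 / D)) (\<sigma> * s * (1 - 2 * r * (1 - (1 - r) * c^2) / D))"
proof -
  define k where "k = 1 - r"
  define p where "p = Re w - c"
  define q where "q = Im w - \<sigma> * s"
  have D: "D > 0" unfolding D_def using s by (simp add: add_pos_nonneg)
  have one: "c^2 + \<sigma>^2 * s^2 = 1" using cs \<sigma> by simp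
  have E1: "(p + r * c)^2 + (q + \<sigma> * r * s)^2 = r^2"
  proof -
    have "(dist w (of_real (1 - r) * Complex c (\<sigma> * s)))^2 = r^2" using w1 by simp
    moreover have "Re w - (1 - r) * c = p + r * c" "Im w - (1 - r) * (\<sigma> * s) = q + \<sigma> * r * s"
      unfolding p_def q_def by (simp_all add: algebra_simps)
    ultimately show ?thesis unfolding dist_sq by simp
  qed
  have "(p + r * c)^2 + (q + \<sigma> * r * s)^2 = p^2 + q^2 + 2 * r * (c * p + \<sigma> * s * q) + r^2 * (c^2 + \<sigma>^2 * s^2)"
    by algebra
  with E1 one have Q: "p^2 + q^2 + 2 * r * (c * p + \<sigma> * s * q) = 0" by simp
  have "(cmod w)^2 = (p + c)^2 + (q + \<sigma> * s)^2" unfolding cmod_sq p_def q_def by simp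
  also have "\<dots> = p^2 + q^2 + 2 * (c * p + \<sigma> * s * q) + (c^2 + \<sigma>^2 * s^2)" by algebra
  finally have "(cmod w)^2 = 1 + 2 * k * (c * p + \<sigma> * s * q)" using Q one unfolding k_def
    by (simp add: algebra_simps)
  with w2 have "c * (2 + 2 * k * (c * p + \<sigma> * s * q)) = 2 * (p + c)" unfolding p_def by simp
  then have "k * c * (c * p + \<sigma> * s * q) = p" by (simp add: algebra_simps)
  then have L0: "p * (1 - k * c^2) - \<sigma> * k * c * s * q = 0" by (simp add: algebra_simps power2_eq_square)
  have "(\<sigma> * k * c * s)^2 + (1 - k * c^2)^2 - D = (k^2 * c^2 - 1) * (c^2 + \<sigma>^2 * s^2 - 1)"
    unfolding D_def k_def using \<sigma> by (simp add: algebra_simps power2_eq_square) algebra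
  then have Dv: "(\<sigma> * k * c * s)^2 + (1 - k * c^2)^2 = D" using one by simp
  define t where "t = (\<sigma> * k * c * s * p + (1 - k * c^2) * q) / D"
  have "D * p - \<sigma> * k * c * s * (\<sigma> * k * c * s * p + (1 - k * c^2) * q)
      = (1 - k * c^2) * (p * (1 - k * c^2) - \<sigma> * k * c * s * q) + p * (D - ((\<sigma> * k * c * s)^2 + (1 - k * c^2)^2))"
    by algebra
  then have "D * p = \<sigma> * k * c * s * (D * t)" using L0 Dv D unfolding t_def by simp
  then have pt: "p = t * (\<sigma> * k * c * s)" using D by (simp add: algebra_simps)
  have "D * q - (1 - k * c^2) * (\<sigma> * k * c * s * p + (1 - k * c^2) * q)
      = - \<sigma> * k * c * s * (p * (1 - k * c^2) - \<sigma> * k * c * s * q) + q * (D - ((\<sigma> * k * c * s)^2 + (1 - k * c^2)^2))"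
    by algebra
  then have "D * q = (1 - k * c^2) * (D * t)" using L0 Dv D unfolding t_def by simp
  then have "D * q = D * (t * (1 - k * c^2))" by (simp only: mult.commute mult.left_commute)
  then have qt: "q = t * (1 - k * c^2)" using D by simp
  have "p^2 + q^2 + 2 * r * (c * p + \<sigma> * s * q)
     = t^2 * ((\<sigma> * k * c * s)^2 + (1 - k * c^2)^2) + 2 * r * t * \<sigma> * s * (k * (c^2 + \<sigma>^2 * s^2) + (1 - k * c^2) - k * \<sigma>^2 * s^2)"
    unfolding pt qt by algebra
  also have "\<dots> = t * (t * D + 2 * r * \<sigma> * s)" using Dv one \<sigma> by (simp add: algebra_simps power2_eq_square)
  finally have tt: "t * (t * D + 2 * r * \<sigma> * s) = 0" using Q by simp
  have "t \<noteq> 0"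
  proof
    assume "t = 0"
    then have "w = Complex c (\<sigma> * s)" using pt qt unfolding p_def q_def by (simp add: complex_eq_iff)
    then have "(cmod w)^2 = 1" using one by (simp add: cmod_sq power_mult_distrib)
    then have "cmod w = 1" by (smt (verit) norm_ge_zero power2_eq_1_iff)
    with w3 show False by simp
  qed
  with tt have "t * D = - 2 * r * \<sigma> * s" by simp
  then have t: "t = - 2 * r * \<sigma> * s / D" using D by (simp add: field_simps)
  have "Re w = c * (1 - 2 * r * (1 - r) * s^2 / D)"
  proof -
    have "Re w = c + t * (\<sigma> * k * c * s)" using pt unfolding p_def by simp
    also have "\<dots> = c - 2 * r * k * c * (\<sigma>^2 * s^2) / D" unfolding t by (simp add: field_simps power2_eq_square)
    finally show ?thesis using \<sigma> D unfolding k_def by (simp add: field_simps)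
  qed
  moreover have "Im w = \<sigma> * s * (1 - 2 * r * (1 - (1 - r) * c^2) / D)"
  proof -
    have "Im w = \<sigma> * s + t * (1 - k * c^2)" using qt unfolding q_def by simp
    then show ?thesis unfolding t k_def using D by (simp add: field_simps)
  qed
  ultimately show ?thesis by (simp add: complex_eq_iff)
qed

lemma poly_dist:
  fixes S a b :: real
  shows "(1 - S) * ((a^2 + S*(1-a)^2) * (S + b^2 * (1 - S)) - (b^2 + S*(1-b)^2) * (S + a^2 * (1 - S)))^2
       + S * ((S*(1-a)^2 - a^2) * (S + b^2 * (1 - S)) + (S*(1-b)^2 - b^2) * (S + a^2 * (1 - S)))^2
       = 4 * S * ((1-a)*(1-b)*S - a*b)^2 * (S + a^2 * (1 - S)) * (S + b^2 * (1 - S))"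
  by (simp add: algebra_simps power2_eq_square)

lemma alg_dist:
  fixes C a b :: real
  assumes C: "0 \<le> C" "C < 1" and a: "0 < a" "a < 1" and b: "0 < b" "b < 1"
  defines "S \<equiv> 1 - C"
  defines "Da \<equiv> S + a^2 * C"
  defines "Db \<equiv> S + b^2 * C"
  defines "Xa \<equiv> 1 - 2 * a * (1 - a) * S / Da"
  defines "Ya \<equiv> 1 - 2 * a * (1 - (1 - a) * C) / Da"
  defines "Xb \<equiv> 1 - 2 * b * (1 - b) * S / Db"
  defines "Yb \<equiv> 1 - 2 * b * (1 - (1 - b) * C) / Db"
  defines "L2 \<equiv> (1 - a) * (1 - b) * S / (a * b)"
  shows "1 + 2 * (C * (Xa - Xb)^2 + S * (Ya + Yb)^2) / ((4 * a * (1 - a) * S / Da) * (4 * b * (1 - b) * S / Db))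
         = (L2 + 1 / L2) / 2"
proof -
  have C': "C = 1 - S" unfolding S_def by simp
  have Da: "Da > 0" unfolding Da_def S_def using C a by (simp add: add_pos_nonneg)
  have Db: "Db > 0" unfolding Db_def S_def using C b by (simp add: add_pos_nonneg)
  have S: "S > 0" unfolding S_def using C by simp
  have Da': "Da = S + a^2 * (1 - S)" unfolding Da_def C' ..
  have Db': "Db = S + b^2 * (1 - S)" unfolding Db_def C' ..
  have Xa: "Xa = (a^2 + S*(1-a)^2) / Da" unfolding Xa_def using Da
    by (simp add: field_simps) (simp add: Da' algebra_simps power2_eq_square)
  have Xb: "Xb = (b^2 + S*(1-b)^2) / Db" unfolding Xb_def using Db
    by (simp add: field_simps) (simp add: Db' algebra_simps power2_eq_square)
  have Ya: "Ya = (S*(1-a)^2 - a^2) / Da" unfolding Ya_def using Da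
    by (simp add: field_simps) (simp add: Da' C' algebra_simps power2_eq_square)
  have Yb: "Yb = (S*(1-b)^2 - b^2) / Db" unfolding Yb_def using Db
    by (simp add: field_simps) (simp add: Db' C' algebra_simps power2_eq_square)
  have e1: "Xa - Xb = ((a^2 + S*(1-a)^2) * Db - (b^2 + S*(1-b)^2) * Da) / (Da * Db)"
    unfolding Xa Xb using Da Db by (simp add: field_simps)
  have e2: "Ya + Yb = ((S*(1-a)^2 - a^2) * Db + (S*(1-b)^2 - b^2) * Da) / (Da * Db)"
    unfolding Ya Yb using Da Db by (simp add: field_simps)
  have "C * (Xa - Xb)^2 + S * (Ya + Yb)^2
     = (1 - S) * (((a^2 + S*(1-a)^2) * Db - (b^2 + S*(1-b)^2) * Da)^2 / (Da * Db)^2)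
       + S * (((S*(1-a)^2 - a^2) * Db + (S*(1-b)^2 - b^2) * Da)^2 / (Da * Db)^2)"
    unfolding e1 e2 C' power_divide ..
  also have "\<dots> = ((1 - S) * ((a^2 + S*(1-a)^2) * Db - (b^2 + S*(1-b)^2) * Da)^2
       + S * ((S*(1-a)^2 - a^2) * Db + (S*(1-b)^2 - b^2) * Da)^2) / (Da * Db)^2"
    by (simp add: add_divide_distrib)
  finally have "C * (Xa - Xb)^2 + S * (Ya + Yb)^2
     = ((1 - S) * ((a^2 + S*(1-a)^2) * Db - (b^2 + S*(1-b)^2) * Da)^2
       + S * ((S*(1-a)^2 - a^2) * Db + (S*(1-b)^2 - b^2) * Da)^2) / (Da * Db)^2" .
  also have "\<dots> = 4 * S * ((1-a)*(1-b)*S - a*b)^2 * Da * Db / (Da * Db)^2"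
    unfolding Da' Db' poly_dist ..
  also have "\<dots> = 4 * S * ((1-a)*(1-b)*S - a*b)^2 / (Da * Db)"
    using Da Db by (simp add: power2_eq_square)
  finally have N: "C * (Xa - Xb)^2 + S * (Ya + Yb)^2 = 4 * S * ((1-a)*(1-b)*S - a*b)^2 / (Da * Db)" .
  have ka: "1 - a > 0" and kb: "1 - b > 0" using a b by auto
  define K where "K = (1 - a) * (1 - b) * S"
  define P where "P = a * b"
  have K: "K > 0" unfolding K_def using ka kb S by simp
  have P: "P > 0" unfolding P_def using a b by simp
  have den: "(4 * a * (1 - a) * S / Da) * (4 * b * (1 - b) * S / Db) = 16 * P * K * S / (Da * Db)"
    unfolding P_def K_def by (simp add: field_simps)
  have "2 * (4 * S * (K - P)^2 / (Da * Db)) / (16 * P * K * S / (Da * Db)) = (K - P)^2 / (2 * P * K)"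
    using Da Db S K P by (simp add: field_simps)
  moreover have "1 + (K - P)^2 / (2 * P * K) = (K / P + 1 / (K / P)) / 2"
    using K P by (simp add: field_simps) (simp add: algebra_simps power2_eq_square)
  ultimately show ?thesis unfolding N den L2_def using K_def P_def by simp
qed

lemma arcosh_L:
  fixes L :: real
  assumes L: "L \<ge> 1"
  shows "arcosh ((L^2 + 1 / L^2) / 2) = 2 * ln L"
proof -
  define x where "x = (L^2 + 1 / L^2) / 2"
  have L2: "L^2 \<ge> 1" using L by (simp add: one_le_power)
  have "L^2 > 0" using L2 by linarith
  then have iL2: "1 / L^2 \<le> 1" using L2 by (simp add: divide_le_eq)
  have x1: "x \<ge> 1"
  proof -
    have "(L - 1/L)^2 \<ge> 0" by simp
    moreover have "(L - 1/L)^2 = L^2 + 1/L^2 - 2" using L by (simp add: power2_diff field_simps power2_eq_square)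
    ultimately show ?thesis unfolding x_def by simp
  qed
  have "x^2 - 1 = ((L^2 - 1/L^2)/2)^2" unfolding x_def using L by (simp add: field_simps power2_eq_square)
  moreover have "(L^2 - 1/L^2)/2 \<ge> 0" using L2 iL2 by simp
  ultimately have "sqrt (x^2 - 1) = (L^2 - 1/L^2)/2" by simp
  then have "x + sqrt (x^2 - 1) = L^2" unfolding x_def by (simp add: field_simps)
  then have "arcosh x = ln (L^2)" using x1 by (simp add: arcosh_real_def)
  also have "\<dots> = 2 * ln L" using L by (simp add: ln_realpow)
  finally show ?thesis unfolding x_def .
qed

lemma rot_geo:
  assumes w: "cmod \<omega> = 1" and z: "z \<in> ideal_geodesic a b"
  shows "\<omega> * z \<in> ideal_geodesic (\<omega> * a) (\<omega> * b)"
proof -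
  have dm: "dist (\<omega> * x) (\<omega> * y) = dist x y" for x y
    using w by (simp add: dist_norm right_diff_distrib[symmetric] norm_mult)
  have lt: "cmod (\<omega> * z) < 1" using z w by (simp add: ideal_geodesic_def norm_mult)
  from z consider
    (circ) g \<rho> where "\<rho> > 0" "(cmod g)^2 = 1 + \<rho>^2" "dist a g = \<rho>" "dist b g = \<rho>" "dist z g = \<rho>"
  | (diam) \<sigma> t where "b = of_real \<sigma> * a" "z = of_real t * a"
    unfolding ideal_geodesic_def by blast
  then show ?thesis
  proof cases
    case circ
    then have "(cmod (\<omega> * g))^2 = 1 + \<rho>^2" "dist (\<omega> * a) (\<omega> * g) = \<rho>"
      "dist (\<omega> * b) (\<omega> * g) = \<rho>" "dist (\<omega> * z) (\<omega> * g) = \<rho>"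
      using w by (simp_all add: dm norm_mult)
    then show ?thesis using lt circ(1) unfolding ideal_geodesic_def by blast
  next
    case diam
    then have "\<omega> * b = of_real \<sigma> * (\<omega> * a)" "\<omega> * z = of_real t * (\<omega> * a)"
      by (simp_all add: algebra_simps)
    then show ?thesis using lt unfolding ideal_geodesic_def by blast
  qed
qed

lemma rot_pdist:
  assumes w: "cmod \<omega> = 1"
  shows "poincare_dist (\<omega> * z) (\<omega> * u) = poincare_dist z u"
proof -
  have "cmod (\<omega> * z - \<omega> * u) = cmod (z - u)" using w by (simp add: right_diff_distrib[symmetric] norm_mult)
  then show ?thesis unfolding poincare_dist_def using w by (simp add: norm_mult)
qed

lemma center_lemma:
  fixes A c :: complex
  assumes A: "cmod A = 1" and r: "0 < r" "r < 1"
    and in_disk: "sphere c r \<subseteq> cball 0 1" and tang: "A \<in> sphere c r"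
  shows "c = of_real (1 - r) * A"
proof -
  have dA: "cmod (A - c) = r" using tang by (simp add: dist_norm norm_minus_commute)
  have c0: "c \<noteq> 0"
  proof
    assume "c = 0" then have "r = 1" using dA A by simp
    with r show False by simp
  qed
  define p where "p = c + of_real r * (c / of_real (cmod c))"
  have pc: "p - c = of_real r * (c / of_real (cmod c))" unfolding p_def by simp
  have "cmod (p - c) = r" unfolding pc using c0 r by (simp only: norm_mult norm_divide norm_of_real) simp
  then have "dist c p = r" by (simp add: dist_norm norm_minus_commute)
  then have "p \<in> cball 0 1" using in_disk by auto
  then have "cmod p \<le> 1" by simp
  moreover have pe: "p = of_real (1 + r / cmod c) * c" unfolding p_def using c0
    by (simp add: field_simps)
  moreover have "cmod p = \<bar>1 + r / cmod c\<bar> * cmod c" unfolding pe norm_mult norm_of_real ..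
  moreover have "\<bar>1 + r / cmod c\<bar> = 1 + r / cmod c" using r by simp
  ultimately have "(1 + r / cmod c) * cmod c \<le> 1" by simp
  moreover have "(1 + r / cmod c) * cmod c = cmod c + r" using c0 by (simp add: field_simps)
  ultimately have le: "cmod c + r \<le> 1" by simp
  have "1 \<le> cmod c + cmod (A - c)" using A norm_triangle_ineq[of c "A - c"] by simp
  with dA le have nc: "cmod c = 1 - r" by simp
  have AA: "inner A A = 1" using A power2_norm_eq_inner[of A] by simp
  have "(cmod (A - c))^2 = 1 - 2 * inner A c + (cmod c)^2"
    using A AA by (simp add: norm_minus_cancel dot_square_norm[symmetric] inner_diff_left inner_diff_right inner_commute)
  then have "inner A c = 1 - r" using dA nc by (simp add: power2_eq_square algebra_simps)
  moreover have cc: "inner c c = (1 - r)^2" using nc power2_norm_eq_inner[of c] by simp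
  moreover have "inner (c - (1 - r) *\<^sub>R A) (c - (1 - r) *\<^sub>R A) = inner c c - 2 * (1 - r) * inner A c + (1 - r)^2 * inner A A"
    by (simp add: inner_diff_left inner_diff_right inner_commute algebra_simps power2_eq_square)
  ultimately have "inner (c - (1 - r) *\<^sub>R A) (c - (1 - r) *\<^sub>R A) = 0"
    using AA by (simp add: power2_eq_square)
  then have "c = (1 - r) *\<^sub>R A" by simp
  then show ?thesis by (simp add: scaleR_conv_of_real)
qed

lemma inner_cnj: "inner x y = Re (cnj x * y)"
  by (simp add: inner_complex_def)

lemma circles_meet:
  fixes c1 c2 :: complex
  assumes ne: "c1 \<noteq> c2" and le: "\<bar>r1 - r2\<bar> \<le> dist c1 c2" and le2: "dist c1 c2 \<le> r1 + r2"
    and r1: "r1 \<ge> 0"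
  shows "sphere c1 r1 \<inter> sphere c2 r2 \<noteq> {}"
proof -
  define D where "D = dist c1 c2"
  have D: "D > 0" unfolding D_def using ne by simp
  define e where "e = (c2 - c1) / of_real D"
  have ne1: "cmod e = 1" unfolding e_def D_def using ne by (simp add: norm_divide dist_norm norm_minus_commute)
  have ce: "c2 - c1 = of_real D * e" unfolding e_def using D by simp
  define p1 where "p1 = c1 + of_real r1 * e"
  define p2 where "p2 = c1 - of_real r1 * e"
  have s1: "p1 \<in> sphere c1 r1" "p2 \<in> sphere c1 r1" unfolding p1_def p2_def using ne1 r1
    by (simp_all add: dist_norm norm_mult)
  have "c2 - p1 = of_real (D - r1) * e" unfolding p1_def using ce by (simp add: algebra_simps)
  then have "cmod (c2 - p1) = \<bar>D - r1\<bar>" by (simp only: norm_mult norm_of_real ne1) simp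
  then have f1: "dist c2 p1 = \<bar>D - r1\<bar>" by (simp add: dist_norm)
  have "c2 - p2 = of_real (D + r1) * e" unfolding p2_def using ce by (simp add: algebra_simps)
  then have "cmod (c2 - p2) = \<bar>D + r1\<bar>" by (simp only: norm_mult norm_of_real ne1) simp
  then have f2: "dist c2 p2 = D + r1" using D r1 by (simp add: dist_norm)
  have conn: "connected ((\<lambda>p. dist c2 p) ` sphere c1 r1)"
    by (intro connected_continuous_image continuous_intros connected_sphere) simp
  have "{dist c2 p1 .. dist c2 p2} \<subseteq> (\<lambda>p. dist c2 p) ` sphere c1 r1"
    using conn s1 by (intro connected_contains_Icc) auto
  moreover have "r2 \<in> {dist c2 p1 .. dist c2 p2}" unfolding f1 f2 using le le2 D_def by auto
  ultimately obtain p where "p \<in> sphere c1 r1" "dist c2 p = r2" by auto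
  then show ?thesis by auto
qed




lemma ext_len:
  fixes c1 c2 :: complex
  assumes ne: "c1 \<noteq> c2" and le: "\<bar>r1 - r2\<bar> \<le> dist c1 c2"
  shows "ext_tangent_length c1 r1 c2 r2 = sqrt ((dist c1 c2)^2 - (r1 - r2)^2)"
proof -
  define w where "w = c2 - c1"
  have nw: "cmod w = dist c1 c2" unfolding w_def by (simp add: dist_norm norm_minus_commute)
  have w0: "cmod w > 0" using ne unfolding w_def by simp
  have key: "(dist p q)^2 = (dist c1 c2)^2 - (r1 - r2)^2" if "ext_common_tangent_pts c1 r1 c2 r2 p q" for p q
  proof -
    from that obtain u where u: "norm u = 1" "p = c1 + of_real r1 * u" "q = c2 + of_real r2 * u"
      "inner (q - p) u = 0" unfolding ext_common_tangent_pts_def by blast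
    have uu: "inner u u = 1" using u(1) power2_norm_eq_inner[of u] by simp
    have qp: "q - p = w + (r2 - r1) *\<^sub>R u" unfolding u(2,3) w_def by (simp add: scaleR_conv_of_real algebra_simps)
    have "inner (q - p) u = inner w u + (r2 - r1)" unfolding qp using uu by (simp add: inner_add_left)
    then have wu: "inner w u = r1 - r2" using u(4) by simp
    have "(dist p q)^2 = (norm (q - p))^2" by (simp add: dist_norm norm_minus_commute)
    also have "\<dots> = inner (q - p) (q - p)" by (rule power2_norm_eq_inner)
    also have "\<dots> = inner w w + 2 * (r2 - r1) * inner w u + (r2 - r1)^2 * inner u u"
      unfolding qp by (simp add: inner_add_left inner_add_right inner_commute algebra_simps power2_eq_square)
    also have "\<dots> = (cmod w)^2 - (r1 - r2)^2" unfolding wu uu power2_norm_eq_inner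
      by (simp add: algebra_simps power2_eq_square)
    finally show ?thesis unfolding nw .
  qed
  define \<kappa> where "\<kappa> = (r1 - r2) / cmod w"
  have "\<bar>\<kappa>\<bar> = \<bar>r1 - r2\<bar> / cmod w" unfolding \<kappa>_def by (simp add: abs_divide)
  also have "\<dots> \<le> 1" using le nw w0 by (simp add: divide_le_eq_1)
  finally have k1: "\<bar>\<kappa>\<bar> \<le> 1" .
  then have k2: "\<kappa>^2 \<le> 1" using abs_le_square_iff[of \<kappa> 1] by simp
  define z where "z = Complex \<kappa> (sqrt (1 - \<kappa>^2))"
  define u where "u = z * (w / of_real (cmod w))"
  have nz: "cmod z = 1" unfolding z_def norm_complex_def using k2 by simp
  have nu: "norm u = 1" unfolding u_def using nz w0 by (simp add: norm_mult norm_divide)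
  have "cnj w * u = z * (cnj w * w) / of_real (cmod w)" unfolding u_def
    by (simp only: times_divide_eq_right mult.assoc mult.left_commute)
  then have "inner w u = Re (z * (cnj w * w) / of_real (cmod w))" unfolding inner_cnj by simp
  also have "cnj w * w = of_real ((cmod w)^2)" using complex_norm_square[of w] by (simp add: mult.commute)
  also have "z * of_real ((cmod w)^2) / of_real (cmod w) = of_real (cmod w) * z"
    using w0 by (simp add: power2_eq_square)
  also have "Re (of_real (cmod w) * z) = \<kappa> * cmod w" unfolding z_def by simp
  finally have wu: "inner w u = r1 - r2" unfolding \<kappa>_def using w0 by simp
  define p where "p = c1 + of_real r1 * u"
  define q where "q = c2 + of_real r2 * u"
  have "q - p = w + (r2 - r1) *\<^sub>R u" unfolding p_def q_def w_def by (simp add: scaleR_conv_of_real algebra_simps)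
  then have "inner (q - p) u = 0" using wu nu power2_norm_eq_inner[of u] by (simp add: inner_add_left)
  then have ex: "ext_common_tangent_pts c1 r1 c2 r2 p q" unfolding ext_common_tangent_pts_def p_def q_def
    using nu by blast
  show ?thesis unfolding ext_tangent_length_def
  proof (rule the_equality)
    show "\<exists>p q. ext_common_tangent_pts c1 r1 c2 r2 p q \<and> sqrt ((dist c1 c2)^2 - (r1 - r2)^2) = dist p q"
    proof (intro exI conjI)
      show "ext_common_tangent_pts c1 r1 c2 r2 p q" by (rule ex)
      have "sqrt ((dist c1 c2)^2 - (r1 - r2)^2) = sqrt ((dist p q)^2)" by (simp only: key[OF ex])
      then show "sqrt ((dist c1 c2)^2 - (r1 - r2)^2) = dist p q" by simp
    qed
  next
    fix t assume "\<exists>p q. ext_common_tangent_pts c1 r1 c2 r2 p q \<and> t = dist p q"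
    then obtain p q where pq: "ext_common_tangent_pts c1 r1 c2 r2 p q" "t = dist p q" by blast
    have "sqrt ((dist c1 c2)^2 - (r1 - r2)^2) = sqrt ((dist p q)^2)" by (simp only: key[OF pq(1)])
    then show "t = sqrt ((dist c1 c2)^2 - (r1 - r2)^2)" using pq(2) by simp
  qed
qed


lemma rot_dist: "cmod \<omega> = 1 \<Longrightarrow> dist (\<omega> * x) (\<omega> * y) = dist x y"
  by (simp add: dist_norm right_diff_distrib[symmetric] norm_mult)

lemma cis_Complex: "Complex (cos x) (sin x) = cis x"
  by (simp add: complex_eq_iff)

lemma the_frame:
  fixes c s r \<sigma> :: real and \<omega> C A1 A2 :: complex
  assumes s: "s > 0" and cs: "c^2 + s^2 = 1" and r: "0 < r" "r < 1" and \<sigma>: "\<sigma>^2 = 1"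
    and w1: "cmod \<omega> = 1" and ww: "cnj \<omega> * \<omega> = 1"
    and C: "C = \<omega> * (of_real (1 - r) * Complex c (\<sigma> * s))"
    and A1: "A1 = \<omega> * Complex c (-s)" and A2: "A2 = \<omega> * Complex c s"
  defines "D \<equiv> s^2 + r^2 * c^2"
  shows "(THE z. z \<in> sphere C r \<inter> ideal_geodesic A1 A2)
       = \<omega> * Complex (c * (1 - 2 * r * (1 - r) * s^2 / D)) (\<sigma> * s * (1 - 2 * r * (1 - (1 - r) * c^2) / D))"
    (is "_ = \<omega> * ?u")
proof (rule the_equality)
  note fp = frame_pt[OF s cs r \<sigma>, folded D_def]
  have "dist C (\<omega> * ?u) = r" unfolding C rot_dist[OF w1] using fp(1) by (simp add: dist_commute)
  moreover have "\<omega> * ?u \<in> ideal_geodesic A1 A2"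
    unfolding A1 A2 by (rule rot_geo[OF w1 frame_geo_I[OF s cs fp(4) fp(3)]])
  ultimately show "\<omega> * ?u \<in> sphere C r \<inter> ideal_geodesic A1 A2" by simp
next
  fix z assume z: "z \<in> sphere C r \<inter> ideal_geodesic A1 A2"
  define w where "w = cnj \<omega> * z"
  have zw: "z = \<omega> * w" unfolding w_def using ww by (simp add: mult.assoc[symmetric] mult.commute[of \<omega>])
  have nc: "cmod (cnj \<omega>) = 1" using w1 by simp
  have "cnj \<omega> * z \<in> ideal_geodesic (cnj \<omega> * A1) (cnj \<omega> * A2)"
    using rot_geo[OF nc] z by simp
  moreover have "cnj \<omega> * A1 = Complex c (-s)" "cnj \<omega> * A2 = Complex c s"
    unfolding A1 A2 using ww by (simp_all add: mult.assoc[symmetric])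
  ultimately have wg: "w \<in> ideal_geodesic (Complex c (-s)) (Complex c s)" unfolding w_def by simp
  have "dist C z = r" using z by simp
  then have wd: "dist w (of_real (1 - r) * Complex c (\<sigma> * s)) = r"
    unfolding C zw rot_dist[OF w1] by (simp add: dist_commute)
  note g = frame_geo_D[OF s cs wg]
  have "w = ?u" using frame_unique[OF s cs r \<sigma> wd conjunct1[OF g] conjunct2[OF g]] unfolding D_def .
  then show "z = \<omega> * ?u" unfolding zw by simp
qed

lemma pair_result:
  fixes ai aj ri rj :: real and ci cj Ai Aj :: complex
  assumes ord: "ai < aj" "aj - ai < pi"
    and ri: "0 < ri" "ri < 1" and rj: "0 < rj" "rj < 1"
    and Ai: "Ai = Complex (cos (2 * ai)) (sin (2 * ai))"
    and Aj: "Aj = Complex (cos (2 * aj)) (sin (2 * aj))"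
    and di: "sphere ci ri \<subseteq> cball 0 1" and ti: "Ai \<in> sphere ci ri"
    and dj: "sphere cj rj \<subseteq> cball 0 1" and tj: "Aj \<in> sphere cj rj"
    and disj: "sphere ci ri \<inter> sphere cj rj = {}"
  shows "let d = dist Ai Aj;
         t = ext_tangent_length ci ri cj rj;
         \<delta> = poincare_dist (THE z. z \<in> sphere ci ri \<inter> ideal_geodesic Ai Aj)
                            (THE z. z \<in> sphere cj rj \<inter> ideal_geodesic Ai Aj);
         lam = exp (\<delta> / 2);
         P = cos ai * sin aj - cos aj * sin ai
     in t = sqrt (1 - ri) * sqrt (1 - rj) * d
      \<and> t = lam * sqrt (2 * ri) * sqrt (2 * rj)
      \<and> d = 2 * P"
proof -
  define \<beta> where "\<beta> = aj - ai"
  define \<theta> where "\<theta> = ai + aj"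
  define c where "c = cos \<beta>"
  define s where "s = sin \<beta>"
  have s0: "s > 0" unfolding s_def \<beta>_def using ord by (simp add: sin_gt_zero)
  have cs: "c^2 + s^2 = 1" unfolding c_def s_def by simp
  have S: "1 - c^2 = s^2" using cs by simp
  define \<omega> where "\<omega> = cis \<theta>"
  have w1: "cmod \<omega> = 1" unfolding \<omega>_def by simp
  have ww: "cnj \<omega> * \<omega> = 1" unfolding \<omega>_def by (simp add: cis_cnj cis_mult)
  define a0 where "a0 = Complex c (-s)"
  define b0 where "b0 = Complex c s"
  have Ai': "Ai = \<omega> * a0"
  proof -
    have "a0 = cis (-\<beta>)" unfolding a0_def c_def s_def by (simp add: complex_eq_iff)
    then have "\<omega> * a0 = cis (\<theta> + - \<beta>)" unfolding \<omega>_def by (simp add: cis_mult)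
    also have "\<theta> + - \<beta> = 2 * ai" unfolding \<theta>_def \<beta>_def by simp
    finally show ?thesis unfolding Ai cis_Complex by simp
  qed
  have Aj': "Aj = \<omega> * b0"
  proof -
    have "b0 = cis \<beta>" unfolding b0_def c_def s_def by (simp add: complex_eq_iff)
    then have "\<omega> * b0 = cis (\<theta> + \<beta>)" unfolding \<omega>_def by (simp add: cis_mult)
    also have "\<theta> + \<beta> = 2 * aj" unfolding \<theta>_def \<beta>_def by simp
    finally show ?thesis unfolding Aj cis_Complex by simp
  qed
  have nAi: "cmod Ai = 1" unfolding Ai by (simp add: cis_Complex)
  have nAj: "cmod Aj = 1" unfolding Aj by (simp add: cis_Complex)
  have ci: "ci = of_real (1 - ri) * Ai" by (rule center_lemma[OF nAi ri di ti])
  have cj: "cj = of_real (1 - rj) * Aj" by (rule center_lemma[OF nAj rj dj tj])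
  define ki where "ki = 1 - ri"
  define kj where "kj = 1 - rj"
  have ki: "ki > 0" and kj: "kj > 0" unfolding ki_def kj_def using ri rj by auto
  have d: "dist Ai Aj = 2 * s"
  proof -
    have "dist Ai Aj = dist a0 b0" unfolding Ai' Aj' by (rule rot_dist[OF w1])
    also have "\<dots> = cmod (Complex 0 (-2 * s))" unfolding a0_def b0_def dist_norm
      by (rule arg_cong[where f=cmod]) (simp add: complex_eq_iff)
    also have "\<dots> = 2 * s" using s0 by (simp add: cmod_def real_sqrt_mult)
    finally show ?thesis .
  qed
  have P: "cos ai * sin aj - cos aj * sin ai = s" unfolding s_def \<beta>_def by (simp add: sin_diff)
  have dc2: "(dist ci cj)^2 = (ri - rj)^2 + 4 * ki * kj * s^2"
  proof -
    have "dist ci cj = dist (of_real ki * a0) (of_real kj * b0)"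
    proof -
      have "ci = \<omega> * (of_real ki * a0)" "cj = \<omega> * (of_real kj * b0)"
        unfolding ci cj Ai' Aj' ki_def kj_def by (simp_all only: mult.left_commute)
      then show ?thesis using rot_dist[OF w1] by simp
    qed
    then have "(dist ci cj)^2 = (ki * c - kj * c)^2 + (ki * (-s) - kj * s)^2"
      using dist_sq[of "of_real ki * a0" "of_real kj * b0"] unfolding a0_def b0_def by simp
    also have "\<dots> = (ki - kj)^2 * (c^2 + s^2) + 4 * ki * kj * s^2" by algebra
    also have "(ki - kj)^2 = (ri - rj)^2" unfolding ki_def kj_def by algebra
    finally show ?thesis using cs by simp
  qed
  have kks: "4 * ki * kj * s^2 > 0" using ki kj s0 by (intro mult_pos_pos) simp_all
  have dpos: "\<bar>ri - rj\<bar> < dist ci cj"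
  proof -
    have "(\<bar>ri - rj\<bar>)^2 < (dist ci cj)^2" unfolding power2_abs dc2 using kks by linarith
    then show ?thesis by (rule power2_less_imp_less[OF _ zero_le_dist])
  qed
  then have cne: "ci \<noteq> cj" by auto
  have "ext_tangent_length ci ri cj rj = sqrt ((dist ci cj)^2 - (ri - rj)^2)"
    by (rule ext_len[OF cne less_imp_le[OF dpos]])
  also have "(dist ci cj)^2 - (ri - rj)^2 = 4 * ki * kj * s^2" unfolding dc2 by simp
  finally have t: "ext_tangent_length ci ri cj rj = sqrt (4 * ki * kj * s^2)" .
  have t1: "sqrt (4 * ki * kj * s^2) = sqrt ki * sqrt kj * (2 * s)"
  proof -
    have "4 * ki * kj * s^2 = ki * kj * (2 * s)^2" by (simp add: power2_eq_square)
    then have "sqrt (4 * ki * kj * s^2) = sqrt ki * sqrt kj * sqrt ((2 * s)^2)" by (simp only: real_sqrt_mult)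
    also have "sqrt ((2 * s)^2) = 2 * s" using s0 by (simp only: real_sqrt_abs)
    finally show ?thesis .
  qed
  have big: "ri * rj \<le> ki * kj * s^2"
  proof (rule ccontr)
    assume "\<not> ?thesis"
    then have lt: "ki * kj * s^2 < ri * rj" by simp
    have id: "(ri - rj)^2 + 4 * (ri * rj) = (ri + rj)^2" by (simp add: power2_eq_square algebra_simps)
    have "4 * ki * kj * s^2 = 4 * (ki * kj * s^2)" by simp
    then have "(dist ci cj)^2 < (ri + rj)^2" using dc2 id lt by linarith
    then have le: "dist ci cj \<le> ri + rj"
      by (rule power2_le_imp_le[OF less_imp_le]) (use ri rj in simp)
    have "sphere ci ri \<inter> sphere cj rj \<noteq> {}"
      using circles_meet[OF cne less_imp_le[OF dpos] le] ri by simp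
    with disj show False by simp
  qed
  have sg1: "(-1::real)^2 = 1" and sg2: "(1::real)^2 = 1" by simp_all
  define Di where "Di = s^2 + ri^2 * c^2"
  define Dj where "Dj = s^2 + rj^2 * c^2"
  define Xi where "Xi = 1 - 2 * ri * (1 - ri) * s^2 / Di"
  define Yi where "Yi = 1 - 2 * ri * (1 - (1 - ri) * c^2) / Di"
  define Xj where "Xj = 1 - 2 * rj * (1 - rj) * s^2 / Dj"
  define Yj where "Yj = 1 - 2 * rj * (1 - (1 - rj) * c^2) / Dj"
  define ui where "ui = Complex (c * Xi) (-1 * s * Yi)"
  define uj where "uj = Complex (c * Xj) (1 * s * Yj)"
  have ci': "ci = \<omega> * (of_real (1 - ri) * Complex c (-1 * s))"
    unfolding ci Ai' a0_def by (simp add: ac_simps)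
  have cj': "cj = \<omega> * (of_real (1 - rj) * Complex c (1 * s))"
    unfolding cj Aj' b0_def by (simp add: ac_simps)
  have THEi: "(THE z. z \<in> sphere ci ri \<inter> ideal_geodesic Ai Aj) = \<omega> * ui"
    using the_frame[OF s0 cs ri sg1 w1 ww ci' Ai'[unfolded a0_def] Aj'[unfolded b0_def]]
    unfolding ui_def Xi_def Yi_def Di_def .
  have THEj: "(THE z. z \<in> sphere cj rj \<inter> ideal_geodesic Ai Aj) = \<omega> * uj"
    using the_frame[OF s0 cs rj sg2 w1 ww cj' Ai'[unfolded a0_def] Aj'[unfolded b0_def]]
    unfolding uj_def Xj_def Yj_def Dj_def .
  have ni: "1 - (cmod ui)^2 = 4 * ri * (1 - ri) * s^2 / Di"
    using frame_pt(2)[OF s0 cs ri sg1] unfolding ui_def Xi_def Yi_def Di_def .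
  have nj: "1 - (cmod uj)^2 = 4 * rj * (1 - rj) * s^2 / Dj"
    using frame_pt(2)[OF s0 cs rj sg2] unfolding uj_def Xj_def Yj_def Dj_def .
  have nij: "(cmod (ui - uj))^2 = c^2 * (Xi - Xj)^2 + s^2 * (Yi + Yj)^2"
  proof -
    have "(cmod (ui - uj))^2 = (c * Xi - c * Xj)^2 + (-1 * s * Yi - 1 * s * Yj)^2"
      unfolding ui_def uj_def cmod_sq by simp
    also have "\<dots> = c^2 * (Xi - Xj)^2 + s^2 * (Yi + Yj)^2" by algebra
    finally show ?thesis .
  qed
  have C0: "0 \<le> c^2" "c^2 < 1" using cs s0 by (simp, smt (verit) zero_less_power)
  define L2 where "L2 = (1 - ri) * (1 - rj) * s^2 / (ri * rj)"
  have ad: "1 + 2 * (c^2 * (Xi - Xj)^2 + s^2 * (Yi + Yj)^2) / ((4 * ri * (1 - ri) * s^2 / Di) * (4 * rj * (1 - rj) * s^2 / Dj))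
         = (L2 + 1 / L2) / 2"
    using alg_dist[OF C0 ri rj] unfolding S Xi_def Yi_def Xj_def Yj_def Di_def Dj_def L2_def .
  have L2: "L2 \<ge> 1" unfolding L2_def using big ri rj by (simp add: ki_def kj_def)
  define L where "L = sqrt L2"
  have L: "L \<ge> 1" "L^2 = L2" "L > 0" unfolding L_def using L2 by simp_all
  have "poincare_dist (\<omega> * ui) (\<omega> * uj) = poincare_dist ui uj" by (rule rot_pdist[OF w1])
  also have "\<dots> = arcosh ((L^2 + 1 / L^2) / 2)"
    unfolding poincare_dist_def nij ni nj ad L(2) ..
  also have "\<dots> = 2 * ln L" by (rule arcosh_L[OF L(1)])
  finally have delta: "poincare_dist (\<omega> * ui) (\<omega> * uj) = 2 * ln L" .
  have lam: "exp (2 * ln L / 2) = L" using L by simp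
  have t2: "sqrt (4 * ki * kj * s^2) = L * sqrt (2 * ri) * sqrt (2 * rj)"
  proof -
    have "L * sqrt (2 * ri) * sqrt (2 * rj) = sqrt (L2 * (2 * ri) * (2 * rj))"
      unfolding L_def by (simp add: real_sqrt_mult)
    also have "L2 * (2 * ri) * (2 * rj) = 4 * ki * kj * s^2"
      unfolding L2_def ki_def kj_def using ri rj by (simp add: field_simps)
    finally show ?thesis by simp
  qed
  show ?thesis unfolding Let_def THEi THEj delta lam t d P
    using t1 t2 unfolding ki_def kj_def by simp
qed


theorem proposition1:
  fixes \<alpha> r :: "nat \<Rightarrow> real"
    and A c :: "nat \<Rightarrow> complex"
    and H :: "nat \<Rightarrow> complex set"
  assumes alpha: "0 \<le> \<alpha> 1" "\<alpha> 1 < \<alpha> 2" "\<alpha> 2 < \<alpha> 3" "\<alpha> 3 < \<alpha> 4" "\<alpha> 4 < pi"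
    and A_def: "\<And>i. A i = Complex (cos (2 * \<alpha> i)) (sin (2 * \<alpha> i))"
    and r_pos: "\<And>i. i \<in> {1..4} \<Longrightarrow> 0 < r i \<and> r i < 1"
    and H_circle: "\<And>i. i \<in> {1..4} \<Longrightarrow> H i = sphere (c i) (r i)"
    and H_in_disk: "\<And>i. i \<in> {1..4} \<Longrightarrow> H i \<subseteq> cball 0 1"
    and H_tangent: "\<And>i. i \<in> {1..4} \<Longrightarrow> A i \<in> H i"
    and H_disj: "\<And>i j. i \<in> {1..4} \<Longrightarrow> j \<in> {1..4} \<Longrightarrow> i \<noteq> j \<Longrightarrow> H i \<inter> H j = {}"
  shows "\<forall>i j. 1 \<le> i \<and> i < j \<and> j \<le> 4 \<longrightarrow>
    (let d = dist (A i) (A j);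
         t = ext_tangent_length (c i) (r i) (c j) (r j);
         \<delta> = poincare_dist (THE z. z \<in> H i \<inter> ideal_geodesic (A i) (A j))
                            (THE z. z \<in> H j \<inter> ideal_geodesic (A i) (A j));
         lam = exp (\<delta> / 2);
         P = cos (\<alpha> i) * sin (\<alpha> j) - cos (\<alpha> j) * sin (\<alpha> i)
     in t = sqrt (1 - r i) * sqrt (1 - r j) * d
      \<and> t = lam * sqrt (2 * r i) * sqrt (2 * r j)
      \<and> d = 2 * P)"
  proof (intro allI impI)
  fix i j :: nat
  assume ij: "1 \<le> i \<and> i < j \<and> j \<le> 4"
  have iv: "i = 1 \<or> i = 2 \<or> i = 3" and jv: "j = 2 \<or> j = 3 \<or> j = 4" using ij by auto
  have mono: "\<alpha> i < \<alpha> j" using iv jv ij alpha by auto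
  have rng: "0 \<le> \<alpha> i" "\<alpha> j < pi" using iv jv alpha by auto
  have ii: "i \<in> {1..4}" and jj: "j \<in> {1..4}" using ij by auto
  have ne: "i \<noteq> j" using ij by simp
  show "let d = dist (A i) (A j);
         t = ext_tangent_length (c i) (r i) (c j) (r j);
         \<delta> = poincare_dist (THE z. z \<in> H i \<inter> ideal_geodesic (A i) (A j))
                            (THE z. z \<in> H j \<inter> ideal_geodesic (A i) (A j));
         lam = exp (\<delta> / 2);
         P = cos (\<alpha> i) * sin (\<alpha> j) - cos (\<alpha> j) * sin (\<alpha> i)
     in t = sqrt (1 - r i) * sqrt (1 - r j) * d
      \<and> t = lam * sqrt (2 * r i) * sqrt (2 * r j)
      \<and> d = 2 * P"
    unfolding H_circle[OF ii] H_circle[OF jj]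
  proof (rule pair_result)
    show "\<alpha> i < \<alpha> j" by (rule mono)
    show "\<alpha> j - \<alpha> i < pi" using rng by simp
    show "0 < r i" "r i < 1" using r_pos[OF ii] by auto
    show "0 < r j" "r j < 1" using r_pos[OF jj] by auto
    show "A i = Complex (cos (2 * \<alpha> i)) (sin (2 * \<alpha> i))" by (rule A_def)
    show "A j = Complex (cos (2 * \<alpha> j)) (sin (2 * \<alpha> j))" by (rule A_def)
    show "sphere (c i) (r i) \<subseteq> cball 0 1" using H_in_disk[OF ii] H_circle[OF ii] by simp
    show "sphere (c j) (r j) \<subseteq> cball 0 1" using H_in_disk[OF jj] H_circle[OF jj] by simp
    show "A i \<in> sphere (c i) (r i)" using H_tangent[OF ii] H_circle[OF ii] by simp
    show "A j \<in> sphere (c j) (r j)" using H_tangent[OF jj] H_circle[OF jj] by simp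
    show "sphere (c i) (r i) \<inter> sphere (c j) (r j) = {}" using H_disj[OF ii jj ne] H_circle[OF ii] H_circle[OF jj] by simp
  qed
qed

end
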